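(* Let $\mathcal{Q}$ be a set of queries and $\mathcal{R}$ a set of rule sets, equipped with a semantic distance $d_{\text{sem}}$ (on $\mathcal{Q}$ and on $\mathcal{R}$) satisfying the axioms of a metric. Let $E$ be an encoder mapping queries and rule sets to vectors in a Euclidean space, and suppose there is a constant $C>0$ such that $d_{\text{sem}}(A,B)\le C\,\|E(A)-E(B)\|$ for all queries $A,B$ and for all rule sets $A,B$. Let $\Psi:\mathcal{Q}\to\mathcal{R}$ be $L_\Psi$-Lipschitz with respect to $d_{\text{sem}}$, i.e. $d_{\text{sem}}(\Psi(q),\Psi(q'))\le L_\Psi\, d_{\text{sem}}(q,q')$ for some $L_\Psi\ge 0$, and set $\text{Dist}=d_{\text{sem}}$ on $\mathcal{R}$. Let $\mathcal{C}_k$ be a finite set of samples $i$, each consisting of a query $q_i\in\mathcal{Q}$ and a rule set $\mathcal{R}_i\in\mathcal{R}$, with $\mathcal{R}_i^{LLM}=\Psi(q_i)$ and cognitive gap $g_i=\text{Dist}(\mathcal{R}_i^{LLM},\mathcal{R}_i)$. Suppose the cluster has diameter $\epsilon>0$ in the concatenated embedding space, i.e. $\|(E(q_i)\oplus E(\mathcal{R}_i))-(E(q_j)\oplus E(\mathcal{R}_j))\|<\epsilon$ for all $i,j\in\mathcal{C}_k$. Then the intra-cluster variance of the cognitive gap satisfies $$\text{Var}(g_i)<[C\cdot(1+L_\Psi)\cdot\epsilon]^2.$$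
   Context: $\oplus$ denotes vector concatenation and $\|\cdot\|$ the Euclidean norm. $\Psi$ models the LLM's rule-generation function, which, given a query, produces a predicted rule set. $\text{Var}(g_i)$ denotes the variance of the values $g_i$ over the samples $i\in\mathcal{C}_k$ (uniform empirical distribution on the cluster). *)

theory Defs
  imports "HOL-Analysis.Analysis"
begin

definition is_metric :: "('a \<Rightarrow> 'a \<Rightarrow> real) \<Rightarrow> bool" where
  "is_metric d \<longleftrightarrow>
     (\<forall>x y. 0 \<le> d x y) \<and>
     (\<forall>x y. d x y = 0 \<longleftrightarrow> x = y) \<and>
     (\<forall>x y. d x y = d y x) \<and>
     (\<forall>x y z. d x z \<le> d x y + d y z)"

definition emp_mean :: "'i set \<Rightarrow> ('i \<Rightarrow> real) \<Rightarrow> real" where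
  "emp_mean S g = (\<Sum>i\<in>S. g i) / real (card S)"

definition emp_var :: "'i set \<Rightarrow> ('i \<Rightarrow> real) \<Rightarrow> real" where
  "emp_var S g = (\<Sum>i\<in>S. (g i - emp_mean S g)\<^sup>2) / real (card S)"

end

theory Submission
  imports Defs
begin

theorem theorem2:
  fixes dQ :: "'q \<Rightarrow> 'q \<Rightarrow> real"
    and dR :: "'r \<Rightarrow> 'r \<Rightarrow> real"
    and EQ :: "'q \<Rightarrow> 'e::euclidean_space"
    and ER :: "'r \<Rightarrow> 'e"
    and \<Psi> :: "'q \<Rightarrow> 'r"
    and C L\<^sub>\<Psi> \<epsilon> :: real
    and Ck :: "'i set"
    and q :: "'i \<Rightarrow> 'q"
    and R :: "'i \<Rightarrow> 'r"
  assumes metQ: "is_metric dQ"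
    and metR: "is_metric dR"
    and C_pos: "C > 0"
    and encQ: "\<And>A B. dQ A B \<le> C * norm (EQ A - EQ B)"
    and encR: "\<And>A B. dR A B \<le> C * norm (ER A - ER B)"
    and L_nonneg: "L\<^sub>\<Psi> \<ge> 0"
    and lip: "\<And>x y. dR (\<Psi> x) (\<Psi> y) \<le> L\<^sub>\<Psi> * dQ x y"
    and fin: "finite Ck"
    and eps_pos: "\<epsilon> > 0"
    and diam: "\<And>i j. i \<in> Ck \<Longrightarrow> j \<in> Ck \<Longrightarrow>
                 norm ((EQ (q i), ER (R i)) - (EQ (q j), ER (R j))) < \<epsilon>"
  shows "emp_var Ck (\<lambda>i. dR (\<Psi> (q i)) (R i)) < (C * (1 + L\<^sub>\<Psi>) * \<epsilon>)\<^sup>2"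
proof -
  define g where "g = (\<lambda>i. dR (\<Psi> (q i)) (R i))"
  define D where "D = C * (1 + L\<^sub>\<Psi>) * \<epsilon>"
  have Dpos: "D > 0" unfolding D_def using C_pos L_nonneg eps_pos by simp
  have sym: "\<And>x y. dR x y = dR y x" and tri: "\<And>x y z. dR x z \<le> dR x y + dR y z"
    using metR unfolding is_metric_def by blast+
  have half: "g i - g j < D" if i: "i \<in> Ck" and j: "j \<in> Ck" for i j
  proof -
    let ?P = "(EQ (q i), ER (R i)) - (EQ (q j), ER (R j))"
    have n1: "norm (EQ (q i) - EQ (q j)) \<le> norm ?P"
      using norm_fst_le[of "EQ (q i) - EQ (q j)" "ER (R i) - ER (R j)"] by simp
    have n2: "norm (ER (R i) - ER (R j)) \<le> norm ?P"
      using norm_snd_le[of "ER (R i) - ER (R j)" "EQ (q i) - EQ (q j)"] by simp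
    have np: "norm ?P < \<epsilon>" using diam i j by blast
    have "g i \<le> dR (\<Psi> (q i)) (\<Psi> (q j)) + dR (\<Psi> (q j)) (R i)"
      unfolding g_def by (rule tri)
    also have "dR (\<Psi> (q j)) (R i) \<le> g j + dR (R j) (R i)"
      unfolding g_def by (rule tri)
    finally have "g i - g j \<le> dR (\<Psi> (q i)) (\<Psi> (q j)) + dR (R i) (R j)"
      using sym[of "R j" "R i"] by linarith
    also have "\<dots> \<le> L\<^sub>\<Psi> * (C * norm ?P) + C * norm ?P"
    proof -
      have "dR (\<Psi> (q i)) (\<Psi> (q j)) \<le> L\<^sub>\<Psi> * dQ (q i) (q j)" by (rule lip)
      also have "\<dots> \<le> L\<^sub>\<Psi> * (C * norm (EQ (q i) - EQ (q j)))"
        using encQ L_nonneg by (simp add: mult_left_mono)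
      also have "\<dots> \<le> L\<^sub>\<Psi> * (C * norm ?P)"
        using n1 C_pos L_nonneg by (simp add: mult_left_mono)
      finally have a: "dR (\<Psi> (q i)) (\<Psi> (q j)) \<le> L\<^sub>\<Psi> * (C * norm ?P)" .
      have "dR (R i) (R j) \<le> C * norm (ER (R i) - ER (R j))" by (rule encR)
      also have "\<dots> \<le> C * norm ?P" using n2 C_pos by simp
      finally show ?thesis using a by linarith
    qed
    also have "\<dots> = C * (1 + L\<^sub>\<Psi>) * norm ?P" by (simp add: algebra_simps)
    also have "\<dots> < D" unfolding D_def using np C_pos L_nonneg
      by (intro mult_strict_left_mono) auto
    finally show ?thesis .
  qed
  show ?thesis
  proof (cases "Ck = {}")
    case True
    then show ?thesis unfolding emp_var_def D_def[symmetric] using Dpos by simp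
  next
    case False
    have n: "card Ck > 0" using False fin card_gt_0_iff by blast
    have dev: "\<bar>g i - emp_mean Ck g\<bar> < D" if i: "i \<in> Ck" for i
    proof -
      have "g i - emp_mean Ck g = (\<Sum>j\<in>Ck. g i - g j) / real (card Ck)"
        unfolding emp_mean_def using n by (simp add: sum_subtractf field_simps)
      hence "\<bar>g i - emp_mean Ck g\<bar> = \<bar>\<Sum>j\<in>Ck. g i - g j\<bar> / real (card Ck)"
        by simp
      also have "\<dots> \<le> (\<Sum>j\<in>Ck. \<bar>g i - g j\<bar>) / real (card Ck)"
        by (intro divide_right_mono sum_abs) auto
      also have "\<dots> < (\<Sum>j\<in>Ck. D) / real (card Ck)"
        using half i n fin False by (intro divide_strict_right_mono sum_strict_mono) (auto simp: abs_less_iff)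
      also have "\<dots> = D" using n by simp
      finally show ?thesis .
    qed
    have "(\<Sum>i\<in>Ck. (g i - emp_mean Ck g)\<^sup>2) < (\<Sum>i\<in>Ck. D\<^sup>2)"
    proof (rule sum_strict_mono[OF fin False])
      fix i assume "i \<in> Ck"
      from dev[OF this] show "(g i - emp_mean Ck g)\<^sup>2 < D\<^sup>2"
        by (metis abs_ge_zero abs_power2 power2_abs power_strict_mono zero_less_numeral)
    qed
    hence "emp_var Ck g < D\<^sup>2" unfolding emp_var_def using n
      by (simp add: divide_less_eq mult.commute)
    thus ?thesis unfolding g_def D_def .
  qed
qed

end
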